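(* Consider a radial three-phase distribution grid modeled by a tree on buses $\{0,1,\ldots,N\}$ with feeder bus $0$, where every bus $n\in\{1,\ldots,N\}$ has a unique parent bus $\pi_n<n$; line $n$ connects $\pi_n$ and $n$, and $\mathcal{C}_n$ denotes the set of children of bus $n$. For each line $n$ let $\mathbf{Z}_n=\mathbf{Z}_n^{\top}\in\mathbb{C}^{3\times 3}$ be its phase impedance matrix and define $\tilde{\mathbf{Z}}_n:=\operatorname{diag}(\boldsymbol{\alpha}^* )\mathbf{Z}_n\operatorname{diag}(\boldsymbol{\alpha})$, where $\boldsymbol{\alpha}:=[1~\alpha~\alpha^2]^{\top}$ and $\alpha=e^{-j2\pi/3}$. Let $\mathbf{s}_n=\mathbf{p}_n+j\mathbf{q}_n\in\mathbb{C}^3$ (with $\mathbf{p}_n,\mathbf{q}_n\in\mathbb{R}^3$), $\mathbf{v}_n\in\mathbb{R}^3$ and $\mathbf{S}_n\in\mathbb{C}^3$, $n=1,\ldots,N$, satisfy for all $n\in\{1,\ldots,N\}$ \[\mathbf{s}_n=\sum_{k\in\mathcal{C}_n}\mathbf{S}_k-\mathbf{S}_n,\qquad \mathbf{v}_{\pi_n}-\mathbf{v}_n=2\,\mathrm{Re}\big[\tilde{\mathbf{Z}}_n^*\mathbf{S}_n\big],\] where $\mathbf{v}_0:=v_0\mathbf{1}_3$ for a scalar $v_0$, $^*$ denotes entrywise complex conjugation and $\mathrm{Re}$ is taken entrywise. Stack $\mathbf{v}:=[\mathbf{v}_1^{\top}\cdots\mathbf{v}_N^{\top}]^{\top}$,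 $\mathbf{p}:=[\mathbf{p}_1^{\top}\cdots\mathbf{p}_N^{\top}]^{\top}$, $\mathbf{q}:=[\mathbf{q}_1^{\top}\cdots\mathbf{q}_N^{\top}]^{\top}\in\mathbb{R}^{3N}$. Then \[\mathbf{v}=\mathbf{R}\mathbf{p}+\mathbf{X}\mathbf{q}+v_0\mathbf{1}_{3N},\] where $\mathbf{R}:=2\mathbf{M}\,\mathrm{bdiag}(\{\mathrm{Re}[\tilde{\mathbf{Z}}_n]\})\mathbf{M}^{\top}$, $\mathbf{X}:=2\mathbf{M}\,\mathrm{bdiag}(\{\mathrm{Im}[\tilde{\mathbf{Z}}_n]\})\mathbf{M}^{\top}$ and $\mathbf{M}:=\mathbf{T}(\mathbf{I}_3\otimes\mathbf{F})\mathbf{T}^{\top}$.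
   Context: The reduced branch-bus incidence matrix $\mathbf{A}\in\mathbb{R}^{N\times N}$ is obtained from the full branch-bus incidence matrix $\tilde{\mathbf{A}}=[\mathbf{a}_0~\mathbf{A}]\in\mathbb{R}^{N\times(N+1)}$ (rows indexed by lines, columns by buses $0,\ldots,N$), whose row $n$ has entry $+1$ in column $\pi_n$, entry $-1$ in column $n$, and zeros elsewhere, by deleting the column $\mathbf{a}_0$ of bus $0$. The matrix $\mathbf{F}:=-\mathbf{A}^{-1}$. $\mathrm{bdiag}(\{\mathbf{Y}_n\})$ is the block diagonal matrix with blocks $\mathbf{Y}_1,\ldots,\mathbf{Y}_N$. The permutation matrix $\mathbf{T}\in\mathbb{R}^{3N\times 3N}$ is $\mathbf{T}:=[\mathbf{I}_3\otimes\mathbf{e}_1^{\top};\ \ldots;\ \mathbf{I}_3\otimes\mathbf{e}_N^{\top}]$ (blocks stacked vertically), where $\mathbf{e}_n$ is the $n$-th column of $\mathbf{I}_N$; it maps a vector stacked per phase (all buses of phase $a$, then $b$, then $c$) to the same vector stacked per bus. *)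

theory Defs
  imports Complex_Main "Jordan_Normal_Form.Matrix"
begin

definition kron :: "'a::times mat \<Rightarrow> 'a mat \<Rightarrow> 'a mat" where
  "kron A B = mat (dim_row A * dim_row B) (dim_col A * dim_col B)
     (\<lambda>(i,j). A $$ (i div dim_row B, j div dim_col B) * B $$ (i mod dim_row B, j mod dim_col B))"

definition children :: "nat \<Rightarrow> (nat \<Rightarrow> nat) \<Rightarrow> nat \<Rightarrow> nat set" where
  "children N par n = {k \<in> {1..N}. par k = n}"

text \<open>Reduced branch-bus incidence matrix A (row l = line l+1, column b = bus b+1).
  Full incidence row n has +1 at column par n and -1 at column n; column of bus 0 removed.\<close>
definition red_incidence :: "nat \<Rightarrow> (nat \<Rightarrow> nat) \<Rightarrow> real mat" where
  "red_incidence N par = mat N N (\<lambda>(l,b).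
      (if par (l+1) = b+1 then 1 else 0) - (if l = b then 1 else 0))"

definition inv_mat :: "nat \<Rightarrow> real mat \<Rightarrow> real mat" where
  "inv_mat N A = (THE B. B \<in> carrier_mat N N \<and> inverts_mat A B \<and> inverts_mat B A)"

definition Fmat :: "nat \<Rightarrow> (nat \<Rightarrow> nat) \<Rightarrow> real mat" where
  "Fmat N par = - inv_mat N (red_incidence N par)"

text \<open>Permutation matrix T = [I3 kron e_1^T; ...; I3 kron e_N^T] (3-row blocks stacked).\<close>
definition Tmat :: "nat \<Rightarrow> real mat" where
  "Tmat N = mat (3*N) (3*N) (\<lambda>(r,c).
      kron (1\<^sub>m 3) (mat_of_row (unit_vec N (r div 3))) $$ (r mod 3, c))"

definition Mmat :: "nat \<Rightarrow> (nat \<Rightarrow> nat) \<Rightarrow> real mat" where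
  "Mmat N par = Tmat N * kron (1\<^sub>m 3) (Fmat N par) * transpose_mat (Tmat N)"

definition alpha :: complex where
  "alpha = exp (- \<i> * 2 * pi / 3)"

definition alpha_vec :: "complex vec" where
  "alpha_vec = vec 3 (\<lambda>i. alpha ^ i)"

definition Ztilde :: "complex mat \<Rightarrow> complex mat" where
  "Ztilde Z = mat_diag 3 (\<lambda>i. cnj (alpha_vec $ i)) * Z * mat_diag 3 (\<lambda>i. alpha_vec $ i)"

definition bdiag :: "nat \<Rightarrow> (nat \<Rightarrow> 'a::zero mat) \<Rightarrow> 'a mat" where
  "bdiag N Y = diag_block_mat (map Y [1..<N+1])"

definition Rmat :: "nat \<Rightarrow> (nat \<Rightarrow> nat) \<Rightarrow> (nat \<Rightarrow> complex mat) \<Rightarrow> real mat" where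
  "Rmat N par Z = 2 \<cdot>\<^sub>m (Mmat N par * bdiag N (\<lambda>n. map_mat Re (Ztilde (Z n))) * transpose_mat (Mmat N par))"

definition Xmat :: "nat \<Rightarrow> (nat \<Rightarrow> nat) \<Rightarrow> (nat \<Rightarrow> complex mat) \<Rightarrow> real mat" where
  "Xmat N par Z = 2 \<cdot>\<^sub>m (Mmat N par * bdiag N (\<lambda>n. map_mat Im (Ztilde (Z n))) * transpose_mat (Mmat N par))"

definition stack :: "nat \<Rightarrow> (nat \<Rightarrow> 'a vec) \<Rightarrow> 'a vec" where
  "stack N x = vec (3*N) (\<lambda>i. x (i div 3 + 1) $ (i mod 3))"

end

theory Submission
  imports Defs "Jordan_Normal_Form.Determinant"
begin

lemma aux: fixes f y0 y1 y2 x0 x1 x2 :: "nat \<Rightarrow> real" and g :: "nat \<Rightarrow> nat \<Rightarrow> real"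
  shows "(\<Sum>m<N. f m * (y0 m * (\<Sum>c<N. g c m * x0 c) + y1 m * (\<Sum>c<N. g c m * x1 c) + y2 m * (\<Sum>c<N. g c m * x2 c)))
   = (\<Sum>c<N. (\<Sum>m<N. f m * y0 m * g c m) * x0 c + (\<Sum>m<N. f m * y1 m * g c m) * x1 c + (\<Sum>m<N. f m * y2 m * g c m) * x2 c)"
proof -
  have "(\<Sum>m<N. f m * (y0 m * (\<Sum>c<N. g c m * x0 c) + y1 m * (\<Sum>c<N. g c m * x1 c) + y2 m * (\<Sum>c<N. g c m * x2 c)))
     = (\<Sum>m<N. \<Sum>c<N. f m * y0 m * g c m * x0 c + f m * y1 m * g c m * x1 c + f m * y2 m * g c m * x2 c)"
    by (intro sum.cong refl) (simp add: sum_distrib_left sum.distrib algebra_simps)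
  also have "\<dots> = (\<Sum>c<N. \<Sum>m<N. f m * y0 m * g c m * x0 c + f m * y1 m * g c m * x1 c + f m * y2 m * g c m * x2 c)"
    by (rule sum.swap)
  also have "\<dots> = (\<Sum>c<N. (\<Sum>m<N. f m * y0 m * g c m) * x0 c + (\<Sum>m<N. f m * y1 m * g c m) * x1 c + (\<Sum>m<N. f m * y2 m * g c m) * x2 c)"
    by (intro sum.cong refl) (simp add: sum_distrib_right sum.distrib)
  finally show ?thesis .
qed

lemma A_carrier: "red_incidence N par \<in> carrier_mat N N"
  unfolding red_incidence_def by auto

lemma A_det:
  assumes tree: "\<And>n. n \<in> {1..N} \<Longrightarrow> par n < n"
  shows "det (red_incidence N par) \<noteq> 0"
proof -
  let ?A = "red_incidence N par"
  have ut: "upper_triangular (transpose_mat ?A)"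
    unfolding upper_triangular_def
  proof (intro allI impI)
    fix i j assume i: "i < dim_row (transpose_mat ?A)" and j: "j < i"
    have "par (j+1) < j+1" using tree[of "j+1"] i j by (auto simp: red_incidence_def)
    then show "transpose_mat ?A $$ (i,j) = 0" using i j by (auto simp: red_incidence_def)
  qed
  have c: "transpose_mat ?A \<in> carrier_mat N N" using A_carrier by auto
  have "det ?A = det (transpose_mat ?A)" using det_transpose[OF A_carrier] by simp
  also have "\<dots> = prod_list (diag_mat (transpose_mat ?A))" by (rule det_upper_triangular[OF ut c])
  also have "\<dots> = (\<Prod>i<N. - 1)"
    proof -
      have np: "par (Suc i) \<noteq> Suc i" if "i < N" for i using tree[of "Suc i"] that by auto
      show ?thesis
    unfolding prod_list_diag_prod using c np by (auto simp: red_incidence_def intro!: prod.cong)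
    qed
  finally show ?thesis by simp
qed

lemma inv_props:
  assumes tree: "\<And>n. n \<in> {1..N} \<Longrightarrow> par n < n"
  shows "inv_mat N (red_incidence N par) \<in> carrier_mat N N
    \<and> red_incidence N par * inv_mat N (red_incidence N par) = 1\<^sub>m N
    \<and> inv_mat N (red_incidence N par) * red_incidence N par = 1\<^sub>m N"
proof -
  let ?A = "red_incidence N par"
  have "?A \<in> Units (ring_mat TYPE(real) N N)"
    by (rule det_non_zero_imp_unit[OF A_carrier A_det[OF tree]])
  then obtain B where B: "B \<in> carrier_mat N N" "B * ?A = 1\<^sub>m N" "?A * B = 1\<^sub>m N"
    unfolding Units_def ring_mat_def by auto
  have P: "B \<in> carrier_mat N N \<and> inverts_mat ?A B \<and> inverts_mat B ?A"
    using B A_carrier[of N par] unfolding inverts_mat_def by auto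
  have U: "B' = B" if "B' \<in> carrier_mat N N \<and> inverts_mat ?A B' \<and> inverts_mat B' ?A" for B'
  proof -
    have h: "B' * ?A = 1\<^sub>m N" "?A * B' = 1\<^sub>m N" using that A_carrier[of N par] unfolding inverts_mat_def by auto
    have "B' = B' * (?A * B)" using B(3) right_mult_one_mat[of B' N N] that by auto
    also have "\<dots> = (B' * ?A) * B" using that by (intro assoc_mult_mat[OF _ A_carrier B(1), symmetric]) auto
    also have "\<dots> = B" using h B by simp
    finally show ?thesis .
  qed
  have "inv_mat N ?A = B" unfolding inv_mat_def
    using P U by (rule the_equality)
  then show ?thesis using B by simp
qed

lemma mult_idx: "A \<in> carrier_mat n m \<Longrightarrow> B \<in> carrier_mat m k \<Longrightarrow> i < n \<Longrightarrow> j < k \<Longrightarrow>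
  (A * B) $$ (i,j) = (\<Sum>c\<in>{0..<m}. A $$ (i,c) * B $$ (c,j))"
  by (simp add: scalar_prod_def)

lemma sum_delta_r: "(a::nat) < n \<Longrightarrow> (\<Sum>c\<in>{0..<n}. g c * (if c = a then 1 else (0::'a::semiring_1))) = g a"
proof -
  assume "a < n"
  have "(\<Sum>c\<in>{0..<n}. g c * (if c = a then 1 else (0::'a))) = (\<Sum>c\<in>{0..<n}. if c = a then g c else 0)"
    by (intro sum.cong) auto
  then show ?thesis using \<open>a < n\<close> by (simp add: sum.delta)
qed
lemma sum_delta_l: "(a::nat) < n \<Longrightarrow> (\<Sum>c\<in>{0..<n}. (if c = a then 1 else (0::'a::semiring_1)) * g c) = g a"
proof -
  assume "a < n"
  have "(\<Sum>c\<in>{0..<n}. (if c = a then 1 else (0::'a)) * g c) = (\<Sum>c\<in>{0..<n}. if c = a then g c else 0)"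
    by (intro sum.cong) auto
  then show ?thesis using \<open>a < n\<close> by (simp add: sum.delta)
qed

lemma sigma_lt: "(i::nat) < 3*N \<Longrightarrow> (i mod 3)*N + i div 3 < 3*N"
proof -
  assume i: "i < 3*N"
  have "i mod 3 \<le> 2" by auto
  hence "(i mod 3)*N \<le> 2*N" by (rule mult_right_mono) simp
  moreover have "i div 3 < N" using i by auto
  ultimately show ?thesis by linarith
qed

lemma sigma_div: "(i::nat) < 3*N \<Longrightarrow> ((i mod 3)*N + i div 3) div N = i mod 3"
  by (cases "N = 0") (auto simp: div_add1_eq)
lemma sigma_mod: "(i::nat) < 3*N \<Longrightarrow> ((i mod 3)*N + i div 3) mod N = i div 3"
  by (auto simp: mod_add_left_eq[symmetric])

lemma T_idx: "i < 3*N \<Longrightarrow> c < 3*N \<Longrightarrow> Tmat N $$ (i,c) = (if c = (i mod 3)*N + i div 3 then 1 else 0)"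
proof -
  assume i: "i < 3*N" and c: "c < 3*N"
  have cd: "c div N < 3" using c by (simp add: less_mult_imp_div_less mult.commute)
  have id: "i div 3 < N" using i by auto
  have "Tmat N $$ (i,c) = (if i mod 3 = c div N then 1 else 0) * (if c mod N = i div 3 then 1 else 0)"
    unfolding Tmat_def kron_def using i c cd id by (auto simp: mat_of_row_def)
  also have "\<dots> = (if c = (i mod 3)*N + i div 3 then 1 else 0)"
  proof -
    have "(i mod 3 = c div N \<and> c mod N = i div 3) = (c = (i mod 3)*N + i div 3)"
      using sigma_div[OF i] sigma_mod[OF i] by (metis div_mult_mod_eq mult.commute)
    then show ?thesis by auto
  qed
  finally show ?thesis .
qed

lemma T_carrier: "Tmat N \<in> carrier_mat (3*N) (3*N)" unfolding Tmat_def by auto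

lemma kron_carrier: "A \<in> carrier_mat a a \<Longrightarrow> B \<in> carrier_mat b b \<Longrightarrow> kron A B \<in> carrier_mat (a*b) (a*b)"
  unfolding kron_def by auto

lemma M_idx:
  assumes F: "Fmat N par \<in> carrier_mat N N" and i: "i < 3*N" and j: "j < 3*N"
  shows "Mmat N par $$ (i,j) = (if i mod 3 = j mod 3 then Fmat N par $$ (i div 3, j div 3) else 0)"
proof -
  let ?T = "Tmat N" and ?K = "kron (1\<^sub>m 3) (Fmat N par)"
  have K: "?K \<in> carrier_mat (3*N) (3*N)" using kron_carrier[OF one_carrier_mat F] .
  let ?si = "(i mod 3)*N + i div 3" and ?sj = "(j mod 3)*N + j div 3"
  have si: "?si < 3*N" and sj: "?sj < 3*N" using sigma_lt i j by auto
  have "Mmat N par $$ (i,j) = (\<Sum>c\<in>{0..<3*N}. (?T * ?K) $$ (i,c) * ?T $$ (j,c))"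
    unfolding Mmat_def using i j K T_carrier[of N]
    by (subst mult_idx[of _ "3*N" "3*N" _ "3*N"]) (auto intro!: mult_carrier_mat)
  also have "\<dots> = (\<Sum>c\<in>{0..<3*N}. (?T * ?K) $$ (i,c) * (if c = ?sj then 1 else 0))"
    by (intro sum.cong refl) (simp add: T_idx j)
  also have "\<dots> = (?T * ?K) $$ (i,?sj)" by (rule sum_delta_r[OF sj])
  also have "\<dots> = (\<Sum>d\<in>{0..<3*N}. ?T $$ (i,d) * ?K $$ (d,?sj))"
    using i sj K T_carrier[of N] by (subst mult_idx[of _ "3*N" "3*N" _ "3*N"]) auto
  also have "\<dots> = (\<Sum>d\<in>{0..<3*N}. (if d = ?si then 1 else 0) * ?K $$ (d,?sj))"
    by (intro sum.cong refl) (simp add: T_idx i)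
  also have "\<dots> = ?K $$ (?si,?sj)" by (rule sum_delta_l[OF si])
  also have "\<dots> = (if i mod 3 = j mod 3 then Fmat N par $$ (i div 3, j div 3) else 0)"
    unfolding kron_def using si sj F sigma_div[OF i] sigma_div[OF j] sigma_mod[OF i] sigma_mod[OF j]
    by auto
  finally show ?thesis .
qed

lemma sum3: "(\<Sum>i<3*(N::nat). f i) = (\<Sum>b<N. f (3*b) + f (3*b+1) + f (3*b+2))"
proof (induction N)
  case 0 then show ?case by simp
next
  case (Suc N)
  have "{..<3*Suc N} = {..<3*N} \<union> {3*N, 3*N+1, 3*N+2}" by auto
  then show ?case using Suc by (simp add: ac_simps)
qed

lemma diag_idx:
  assumes Y: "\<And>n. Y n \<in> carrier_mat 3 3"
  shows "diag_block_mat (map Y [a..<a+k]) \<in> carrier_mat (3*k) (3*k) \<and>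
    (\<forall>i<3*k. \<forall>j<3*k. diag_block_mat (map Y [a..<a+k]) $$ (i,j) =
        (if i div 3 = j div 3 then Y (a + i div 3) $$ (i mod 3, j mod 3) else 0))"
proof (induction k arbitrary: a)
  case 0 then show ?case by simp
next
  case (Suc k)
  have eq: "[a..<a+Suc k] = a # [Suc a..<Suc a+k]" by (simp add: upt_rec)
  let ?B = "diag_block_mat (map Y [Suc a..<Suc a+k])"
  from Suc[of "Suc a"] have B: "?B \<in> carrier_mat (3*k) (3*k)"
    and Bi: "\<And>i j. i<3*k \<Longrightarrow> j<3*k \<Longrightarrow> ?B $$ (i,j) =
        (if i div 3 = j div 3 then Y (Suc a + i div 3) $$ (i mod 3, j mod 3) else 0)" by auto
  have Ya: "Y a \<in> carrier_mat 3 3" by (rule Y)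
  have D: "diag_block_mat (map Y [a..<a+Suc k]) = four_block_mat (Y a) (0\<^sub>m 3 (3*k)) (0\<^sub>m (3*k) 3) ?B"
    unfolding eq using B Ya by (simp add: Let_def)
  show ?case
  proof (intro conjI allI impI)
    show "diag_block_mat (map Y [a..<a+Suc k]) \<in> carrier_mat (3*Suc k) (3*Suc k)"
      unfolding D using B Ya by auto
    fix i j assume i: "i < 3 * Suc k" and j: "j < 3 * Suc k"
    show "diag_block_mat (map Y [a..<a+Suc k]) $$ (i,j) =
        (if i div 3 = j div 3 then Y (a + i div 3) $$ (i mod 3, j mod 3) else 0)"
    proof (cases "i < 3")
      case True
      then show ?thesis unfolding D using B Ya i j by auto
    next
      case False
      then obtain i' where i': "i = i' + 3" by (metis add.commute le_Suc_ex not_less)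
      show ?thesis
      proof (cases "j < 3")
        case True then show ?thesis unfolding D using B Ya i j i' by auto
      next
        case False
        then obtain j' where j': "j = j' + 3" by (metis add.commute le_Suc_ex not_less)
        have "i' < 3*k" "j' < 3*k" using i j i' j' by auto
        then show ?thesis unfolding D using B Ya i' j' Bi[of i' j'] by auto
      qed
    qed
  qed
qed

lemma bdiag_idx:
  assumes Y: "\<And>n. Y n \<in> carrier_mat 3 3"
  shows bd: "bdiag N Y \<in> carrier_mat (3*N) (3*N)"
    "i < 3*N \<Longrightarrow> j < 3*N \<Longrightarrow> bdiag N Y $$ (i,j) =
        (if i div 3 = j div 3 then Y (i div 3 + 1) $$ (i mod 3, j mod 3) else 0)"
proof -
  have h: "diag_block_mat (map Y [1..<1+N]) \<in> carrier_mat (3*N) (3*N) \<and>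
    (\<forall>i<3*N. \<forall>j<3*N. diag_block_mat (map Y [1..<1+N]) $$ (i,j) =
        (if i div 3 = j div 3 then Y (1 + i div 3) $$ (i mod 3, j mod 3) else 0))"
    by (rule diag_idx[OF Y])
  have e: "[1..<N+1] = [1..<1+N]" by (simp add: add.commute)
  show "bdiag N Y \<in> carrier_mat (3*N) (3*N)" unfolding bdiag_def e using h by blast
  show "i < 3*N \<Longrightarrow> j < 3*N \<Longrightarrow> bdiag N Y $$ (i,j) =
        (if i div 3 = j div 3 then Y (i div 3 + 1) $$ (i mod 3, j mod 3) else 0)"
    unfolding bdiag_def e using h by (simp add: add.commute)
qed

lemma M_carrier: "Fmat N par \<in> carrier_mat N N \<Longrightarrow> Mmat N par \<in> carrier_mat (3*N) (3*N)"
  unfolding Mmat_def using T_carrier[of N] kron_carrier[OF one_carrier_mat, of "Fmat N par" N 3]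
  by auto

lemma MB_idx:
  assumes F: "Fmat N par \<in> carrier_mat N N" and Y: "\<And>n. Y n \<in> carrier_mat 3 3"
    and i: "i < 3*N" and k: "k < 3*N"
  shows "(Mmat N par * bdiag N Y) $$ (i,k) = Fmat N par $$ (i div 3, k div 3) * Y (k div 3 + 1) $$ (i mod 3, k mod 3)"
proof -
  let ?F = "Fmat N par"
  have kd: "k div 3 < N" using k by auto
  have "(Mmat N par * bdiag N Y) $$ (i,k) = (\<Sum>j<3*N. Mmat N par $$ (i,j) * bdiag N Y $$ (j,k))"
    using mult_idx[OF M_carrier[OF F] bdiag_idx(1)[OF Y] i k] by (simp add: atLeast0LessThan)
  also have "\<dots> = (\<Sum>b<N. (if b = k div 3 then ?F $$ (i div 3, b) * Y (b+1) $$ (i mod 3, k mod 3) else 0))"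
    unfolding sum3
  proof (intro sum.cong refl)
    fix b assume b: "b \<in> {..<N}"
    have l: "3*b < 3*N" "3*b+1 < 3*N" "3*b+2 < 3*N" using b by auto
    have m: "\<And>\<psi>. \<psi> < 3 \<Longrightarrow> Mmat N par $$ (i, 3*b+\<psi>) = (if i mod 3 = \<psi> then ?F $$ (i div 3, b) else 0)"
      using b by (subst M_idx[OF F i]) auto
    have bd: "\<And>\<psi>. \<psi> < 3 \<Longrightarrow> bdiag N Y $$ (3*b+\<psi>, k) = (if b = k div 3 then Y (b+1) $$ (\<psi>, k mod 3) else 0)"
      using b by (subst bdiag_idx(2)[OF Y _ k]) auto
    have "i mod 3 = 0 \<or> i mod 3 = 1 \<or> i mod 3 = 2" by auto
    then show "Mmat N par $$ (i, 3*b) * bdiag N Y $$ (3*b, k) + Mmat N par $$ (i, 3*b+1) * bdiag N Y $$ (3*b+1, k)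
      + Mmat N par $$ (i, 3*b+2) * bdiag N Y $$ (3*b+2, k) =
      (if b = k div 3 then ?F $$ (i div 3, b) * Y (b+1) $$ (i mod 3, k mod 3) else 0)"
      using m[of 0] m[of 1] m[of 2] bd[of 0] bd[of 1] bd[of 2] by auto
  qed
  also have "\<dots> = ?F $$ (i div 3, k div 3) * Y (k div 3 + 1) $$ (i mod 3, k mod 3)"
    using kd by (simp add: sum.delta')
  finally show ?thesis .
qed

lemma div3[simp]: "Suc (3*c) div 3 = (c::nat)" "Suc (Suc (3*c)) div 3 = c"
  "Suc (3*c) mod 3 = 1" "Suc (Suc (3*c)) mod 3 = 2" by presburger+

lemma MBM_idx:
  assumes F: "Fmat N par \<in> carrier_mat N N" and Y: "\<And>n. Y n \<in> carrier_mat 3 3"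
    and i: "i < 3*N" and l: "l < 3*N"
  shows "(Mmat N par * bdiag N Y * transpose_mat (Mmat N par)) $$ (i,l) =
     (\<Sum>m<N. Fmat N par $$ (i div 3, m) * Y (m+1) $$ (i mod 3, l mod 3) * Fmat N par $$ (l div 3, m))"
proof -
  let ?F = "Fmat N par"
  have MB: "Mmat N par * bdiag N Y \<in> carrier_mat (3*N) (3*N)"
    using M_carrier[OF F] bdiag_idx(1)[OF Y] by auto
  have "(Mmat N par * bdiag N Y * transpose_mat (Mmat N par)) $$ (i,l)
     = (\<Sum>k<3*N. (Mmat N par * bdiag N Y) $$ (i,k) * Mmat N par $$ (l,k))"
    using mult_idx[OF MB _ i l, of "transpose_mat (Mmat N par)"] M_carrier[OF F] l
    by (simp add: atLeast0LessThan)
  also have "\<dots> = (\<Sum>m<N. ?F $$ (i div 3, m) * Y (m+1) $$ (i mod 3, l mod 3) * ?F $$ (l div 3, m))"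
    unfolding sum3
  proof (intro sum.cong refl)
    fix b assume b: "b \<in> {..<N}"
    have k: "3*b < 3*N" "3*b+1 < 3*N" "3*b+2 < 3*N" using b by auto
    have mb: "\<And>\<psi>. \<psi> < 3 \<Longrightarrow> (Mmat N par * bdiag N Y) $$ (i, 3*b+\<psi>) = ?F $$ (i div 3, b) * Y (b + 1) $$ (i mod 3, \<psi>)"
      using b by (subst MB_idx[OF F Y i]) auto
    have m: "\<And>\<psi>. \<psi> < 3 \<Longrightarrow> Mmat N par $$ (l, 3*b+\<psi>) = (if l mod 3 = \<psi> then ?F $$ (l div 3, b) else 0)"
      using b by (subst M_idx[OF F l]) auto
    have "l mod 3 = 0 \<or> l mod 3 = 1 \<or> l mod 3 = 2" by auto
    then show "(Mmat N par * bdiag N Y) $$ (i, 3*b) * Mmat N par $$ (l, 3*b) +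
      (Mmat N par * bdiag N Y) $$ (i, 3*b+1) * Mmat N par $$ (l, 3*b+1) +
      (Mmat N par * bdiag N Y) $$ (i, 3*b+2) * Mmat N par $$ (l, 3*b+2) =
      ?F $$ (i div 3, b) * Y (b+1) $$ (i mod 3, l mod 3) * ?F $$ (l div 3, b)"
      using m[of 0] m[of 1] m[of 2] mb[of 0] mb[of 1] mb[of 2] by auto
  qed
  finally show ?thesis .
qed

lemma G:
  assumes F: "Fmat N par \<in> carrier_mat N N" and Y: "\<And>n. Y n \<in> carrier_mat 3 3"
    and i: "i < 3*N"
    and hx: "\<And>m \<psi>. m < N \<Longrightarrow> \<psi> < 3 \<Longrightarrow> xs m \<psi> = - (\<Sum>c<N. Fmat N par $$ (c,m) * x (c+1) $ \<psi>)"
  shows "((2 \<cdot>\<^sub>m (Mmat N par * bdiag N Y * transpose_mat (Mmat N par))) *\<^sub>v stack N x) $ i =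
     -2 * (\<Sum>m<N. Fmat N par $$ (i div 3, m) *
        (Y (m+1) $$ (i mod 3, 0) * xs m 0 + Y (m+1) $$ (i mod 3, 1) * xs m 1 + Y (m+1) $$ (i mod 3, 2) * xs m 2))"
proof -
  let ?F = "Fmat N par" and ?P = "Mmat N par * bdiag N Y * transpose_mat (Mmat N par)"
  let ?b = "i div 3" and ?ph = "i mod 3"
  have P: "?P \<in> carrier_mat (3*N) (3*N)"
    using M_carrier[OF F] bdiag_idx(1)[OF Y] by auto
  have "((2 \<cdot>\<^sub>m ?P) *\<^sub>v stack N x) $ i = 2 * (\<Sum>l<3*N. ?P $$ (i,l) * stack N x $ l)"
  proof -
    have d: "dim_vec (stack N x) = 3*N" by (simp add: stack_def)
    have "((2 \<cdot>\<^sub>m ?P) *\<^sub>v stack N x) $ i = (\<Sum>l\<in>{0..<3*N}. (2 \<cdot>\<^sub>m ?P) $$ (i,l) * stack N x $ l)"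
      using P i d by (auto simp: scalar_prod_def)
    also have "\<dots> = (\<Sum>l\<in>{0..<3*N}. 2 * (?P $$ (i,l) * stack N x $ l))"
      using P i by (intro sum.cong refl) auto
    finally show ?thesis by (simp add: sum_distrib_left atLeast0LessThan)
  qed
  also have "\<dots> = 2 * (\<Sum>c<N. (\<Sum>m<N. ?F $$ (?b, m) * Y (m+1) $$ (?ph, 0) * ?F $$ (c, m)) * x (c+1) $ 0
     + (\<Sum>m<N. ?F $$ (?b, m) * Y (m+1) $$ (?ph, 1) * ?F $$ (c, m)) * x (c+1) $ 1
     + (\<Sum>m<N. ?F $$ (?b, m) * Y (m+1) $$ (?ph, 2) * ?F $$ (c, m)) * x (c+1) $ 2)"
    unfolding sum3
    by (intro arg_cong[where f="\<lambda>t. 2 * t"] sum.cong refl)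
       (auto simp: MBM_idx[OF F Y i] stack_def)
  also have "\<dots> = -2 * (\<Sum>m<N. ?F $$ (?b, m) *
        (Y (m+1) $$ (?ph, 0) * xs m 0 + Y (m+1) $$ (?ph, 1) * xs m 1 + Y (m+1) $$ (?ph, 2) * xs m 2))"
  proof -
    have e: "?F $$ (?b, m) * (Y (m+1) $$ (?ph, 0) * xs m 0 + Y (m+1) $$ (?ph, 1) * xs m 1 + Y (m+1) $$ (?ph, 2) * xs m 2)
      = - (?F $$ (?b, m) * (Y (m+1) $$ (?ph, 0) * (\<Sum>c<N. ?F $$ (c,m) * x (c+1) $ 0)
          + Y (m+1) $$ (?ph, 1) * (\<Sum>c<N. ?F $$ (c,m) * x (c+1) $ 1)
          + Y (m+1) $$ (?ph, 2) * (\<Sum>c<N. ?F $$ (c,m) * x (c+1) $ 2)))" if "m < N" for m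
      using that by (simp add: hx algebra_simps)
    have "2 * (\<Sum>c<N. (\<Sum>m<N. ?F $$ (?b, m) * Y (m+1) $$ (?ph, 0) * ?F $$ (c, m)) * x (c+1) $ 0
     + (\<Sum>m<N. ?F $$ (?b, m) * Y (m+1) $$ (?ph, 1) * ?F $$ (c, m)) * x (c+1) $ 1
     + (\<Sum>m<N. ?F $$ (?b, m) * Y (m+1) $$ (?ph, 2) * ?F $$ (c, m)) * x (c+1) $ 2)
      = 2 * (\<Sum>m<N. ?F $$ (?b, m) * (Y (m+1) $$ (?ph, 0) * (\<Sum>c<N. ?F $$ (c,m) * x (c+1) $ 0)
          + Y (m+1) $$ (?ph, 1) * (\<Sum>c<N. ?F $$ (c,m) * x (c+1) $ 1)
          + Y (m+1) $$ (?ph, 2) * (\<Sum>c<N. ?F $$ (c,m) * x (c+1) $ 2)))"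
      by (simp only: aux)
    also have "\<dots> = -2 * (\<Sum>m<N. - (?F $$ (?b, m) * (Y (m+1) $$ (?ph, 0) * (\<Sum>c<N. ?F $$ (c,m) * x (c+1) $ 0)
          + Y (m+1) $$ (?ph, 1) * (\<Sum>c<N. ?F $$ (c,m) * x (c+1) $ 1)
          + Y (m+1) $$ (?ph, 2) * (\<Sum>c<N. ?F $$ (c,m) * x (c+1) $ 2))))"
      by (simp only: sum_negf)
    also have "\<dots> = -2 * (\<Sum>m<N. ?F $$ (?b, m) *
        (Y (m+1) $$ (?ph, 0) * xs m 0 + Y (m+1) $$ (?ph, 1) * xs m 1 + Y (m+1) $$ (?ph, 2) * xs m 2))"
      by (intro arg_cong[where f="\<lambda>t. -2*t"] sum.cong refl) (simp only: lessThan_iff e)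
    finally show ?thesis .
  qed
  finally show ?thesis .
qed

lemma solve_left:
  assumes Bc: "B \<in> carrier_mat N N" and Ac: "A \<in> carrier_mat N N" and BA: "B * A = 1\<^sub>m N"
    and h: "\<And>m. m < N \<Longrightarrow> (\<Sum>c<N. A $$ (m,c) * u c) = (w m :: real)"
    and b: "b < N"
  shows "u b = (\<Sum>m<N. B $$ (b,m) * w m)"
proof -
  have "(\<Sum>m<N. B $$ (b,m) * w m) = (\<Sum>m<N. B $$ (b,m) * (\<Sum>c<N. A $$ (m,c) * u c))"
    by (intro sum.cong refl) (simp add: h)
  also have "\<dots> = (\<Sum>c<N. (\<Sum>m<N. B $$ (b,m) * A $$ (m,c)) * u c)"
    by (simp add: sum_distrib_left sum_distrib_right mult.assoc) (rule sum.swap)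
  also have "\<dots> = (\<Sum>c<N. (if c = b then 1 else 0) * u c)"
  proof (intro sum.cong refl)
    fix c assume c: "c \<in> {..<N}"
    have "(B * A) $$ (b,c) = (\<Sum>m\<in>{0..<N}. B $$ (b,m) * A $$ (m,c))"
      using mult_idx[OF Bc Ac b] c by auto
    then show "(\<Sum>m<N. B $$ (b,m) * A $$ (m,c)) * u c = (if c = b then 1 else 0) * u c"
      using BA b c by (auto simp: atLeast0LessThan)
  qed
  also have "\<dots> = u b" using sum_delta_l[OF b, of u] by (simp add: atLeast0LessThan)
  finally show ?thesis by simp
qed

lemma solve_right:
  assumes Bc: "B \<in> carrier_mat N N" and Ac: "A \<in> carrier_mat N N" and AB: "A * B = 1\<^sub>m N"
    and h: "\<And>b. b < N \<Longrightarrow> y b = (\<Sum>c<N. A $$ (c,b) * (x c :: real))"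
    and m: "m < N"
  shows "x m = (\<Sum>b<N. B $$ (b,m) * y b)"
proof -
  have "(\<Sum>b<N. B $$ (b,m) * y b) = (\<Sum>b<N. B $$ (b,m) * (\<Sum>c<N. A $$ (c,b) * x c))"
    by (intro sum.cong refl) (simp add: h)
  also have "\<dots> = (\<Sum>c<N. (\<Sum>b<N. A $$ (c,b) * B $$ (b,m)) * x c)"
    by (simp add: sum_distrib_left sum_distrib_right mult_ac) (rule sum.swap)
  also have "\<dots> = (\<Sum>c<N. (if c = m then 1 else 0) * x c)"
  proof (intro sum.cong refl)
    fix c assume c: "c \<in> {..<N}"
    have "(A * B) $$ (c,m) = (\<Sum>b\<in>{0..<N}. A $$ (c,b) * B $$ (b,m))"
      using mult_idx[OF Ac Bc _ m] c by auto
    then show "(\<Sum>b<N. A $$ (c,b) * B $$ (b,m)) * x c = (if c = m then 1 else 0) * x c"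
      using AB m c by (auto simp: atLeast0LessThan)
  qed
  also have "\<dots> = x m" using sum_delta_l[OF m, of x] by (simp add: atLeast0LessThan)
  finally show ?thesis by simp
qed

lemma children_sum: "(\<Sum>k\<in>children N par n. f k) = (\<Sum>c<N. if par (Suc c) = n then f (Suc c) else 0)"
proof -
  have e: "children N par n = Suc ` {c\<in>{..<N}. par (Suc c) = n}"
    unfolding children_def by (auto simp: image_iff) (metis Suc_pred' less_Suc_eq_le not_less_eq_eq le0 Suc_le_eq)
  have "(\<Sum>c\<in>{c\<in>{..<N}. par (Suc c) = n}. f (Suc c)) = (\<Sum>c<N. if par (Suc c) = n then f (Suc c) else 0)"
    by (rule sum.inter_filter) simp
  then show ?thesis unfolding e by (simp add: sum.reindex)
qed

lemma Ztilde_carrier: "Ztilde Z \<in> carrier_mat 3 3"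
  unfolding Ztilde_def carrier_mat_def by (simp add: mat_diag_def)

theorem proposition2:
  fixes N :: nat and par :: "nat \<Rightarrow> nat"
    and Z :: "nat \<Rightarrow> complex mat"
    and p q v :: "nat \<Rightarrow> real vec" and S :: "nat \<Rightarrow> complex vec"
    and v0 :: real
  assumes tree: "\<And>n. n \<in> {1..N} \<Longrightarrow> par n < n"
    and Zdim: "\<And>n. n \<in> {1..N} \<Longrightarrow> Z n \<in> carrier_mat 3 3"
    and Zsym: "\<And>n. n \<in> {1..N} \<Longrightarrow> transpose_mat (Z n) = Z n"
    and dims: "\<And>n. n \<in> {1..N} \<Longrightarrow>
       p n \<in> carrier_vec 3 \<and> q n \<in> carrier_vec 3 \<and> v n \<in> carrier_vec 3 \<and> S n \<in> carrier_vec 3"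
    and power: "\<And>n. n \<in> {1..N} \<Longrightarrow>
       vec 3 (\<lambda>i. Complex (p n $ i) (q n $ i))
         = finsum_vec TYPE(complex) 3 S (children N par n) - S n"
    and voltage: "\<And>n. n \<in> {1..N} \<Longrightarrow>
       (if par n = 0 then vec 3 (\<lambda>_. v0) else v (par n)) - v n
         = 2 \<cdot>\<^sub>v map_vec Re (map_mat cnj (Ztilde (Z n)) *\<^sub>v S n)"
  shows "stack N v = Rmat N par Z *\<^sub>v stack N p + Xmat N par Z *\<^sub>v stack N q + vec (3*N) (\<lambda>_. v0)"
proof -
  let ?A = "red_incidence N par" and ?B = "inv_mat N (red_incidence N par)" and ?F = "Fmat N par"
  from inv_props[OF tree] have Bc: "?B \<in> carrier_mat N N" and AB: "?A * ?B = 1\<^sub>m N"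
    and BA: "?B * ?A = 1\<^sub>m N" by auto
  have Fc: "?F \<in> carrier_mat N N" unfolding Fmat_def using Bc by simp
  have Fi: "\<And>a b. a<N \<Longrightarrow> b<N \<Longrightarrow> ?F $$ (a,b) = - ?B $$ (a,b)" unfolding Fmat_def using Bc by simp
  have Aent: "\<And>a b. a<N \<Longrightarrow> b<N \<Longrightarrow> ?A $$ (a,b) = (if par (a+1) = b+1 then 1 else 0) - (if a = b then 1 else 0)"
    unfolding red_incidence_def by simp
  have dS: "\<And>n. n \<in> {1..N} \<Longrightarrow> S n \<in> carrier_vec 3" using dims by blast
  have dv: "\<And>n. n \<in> {1..N} \<Longrightarrow> v n \<in> carrier_vec 3" using dims by blast
  define W where "W n \<phi> = Re ((map_mat cnj (Ztilde (Z n)) *\<^sub>v S n) $ \<phi>)" for n \<phi>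
  have V: "v (b+1) $ \<phi> = v0 + (\<Sum>m<N. ?B $$ (b,m) * (2 * W (m+1) \<phi>))" if b: "b<N" and \<phi>: "\<phi><3" for b \<phi>
  proof -
    define u where "u c = v (c+1) $ \<phi> - v0" for c
    have h: "(\<Sum>c<N. ?A $$ (m,c) * u c) = 2 * W (m+1) \<phi>" if m: "m<N" for m
    proof -
      have pm: "par (m+1) < m+1" using tree[of "m+1"] m by auto
      have "(\<Sum>c<N. ?A $$ (m,c) * u c) = (\<Sum>c<N. (if c = par (m+1) - 1 then (if par (m+1) = 0 then 0 else u c) else 0)
             - (if c = m then u c else 0))"
        by (intro sum.cong refl) (auto simp: Aent m)
      also have "\<dots> = (if par (m+1) = 0 then 0 else u (par (m+1) - 1)) - u m"
        using m pm by (simp add: sum_subtractf sum.delta')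
      also have "\<dots> = ((if par (m+1) = 0 then vec 3 (\<lambda>_. v0) else v (par (m+1))) - v (m+1)) $ \<phi>"
      proof (cases "par (m+1) = 0")
        case True then show ?thesis using dv[of "m+1"] m \<phi> by (simp add: u_def)
      next
        case False
        then have "par (m+1) \<in> {1..N}" using pm m by auto
        then show ?thesis using False dv[of "m+1"] dv[of "par (m+1)"] m \<phi> by (simp add: u_def)
      qed
      also have "\<dots> = (2 \<cdot>\<^sub>v map_vec Re (map_mat cnj (Ztilde (Z (m+1))) *\<^sub>v S (m+1))) $ \<phi>"
        using voltage[of "m+1"] m by simp
      also have "\<dots> = 2 * W (m+1) \<phi>" unfolding W_def using \<phi> Ztilde_carrier[of "Z (m+1)"] by simp
      finally show ?thesis .
    qed
    have "u b = (\<Sum>m<N. ?B $$ (b,m) * (2 * W (m+1) \<phi>))"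
      by (rule solve_left[OF Bc A_carrier BA h b])
    then show ?thesis unfolding u_def by simp
  qed
  have PC: "Complex (p (b+1) $ \<psi>) (q (b+1) $ \<psi>) = (\<Sum>c<N. if par (Suc c) = b+1 then S (Suc c) $ \<psi> else 0) - S (b+1) $ \<psi>"
    if b: "b<N" and \<psi>: "\<psi><3" for b \<psi>
  proof -
    have fin: "finite (children N par (b+1))" unfolding children_def by auto
    have cs: "S \<in> children N par (b+1) \<rightarrow> carrier_vec 3" using dS unfolding children_def by auto
    have "Complex (p (b+1) $ \<psi>) (q (b+1) $ \<psi>) = (finsum_vec TYPE(complex) 3 S (children N par (b+1)) - S (b+1)) $ \<psi>"
    proof -
      have mem: "b+1 \<in> {1..N}" using b by auto
      show ?thesis using arg_cong[OF power[OF mem], of "\<lambda>x. x $ \<psi>"] \<psi> by simp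
    qed
    also have "\<dots> = (\<Sum>k\<in>children N par (b+1). S k $ \<psi>) - S (b+1) $ \<psi>"
      using index_finsum_vec[OF fin \<psi> cs] dS[of "b+1"] b \<psi> by simp
    finally show ?thesis by (simp add: children_sum)
  qed
  have PR: "Re (S (m+1) $ \<psi>) = (\<Sum>b<N. ?B $$ (b,m) * p (b+1) $ \<psi>)"
    and PI: "Im (S (m+1) $ \<psi>) = (\<Sum>b<N. ?B $$ (b,m) * q (b+1) $ \<psi>)" if m: "m<N" and \<psi>: "\<psi><3" for m \<psi>
  proof -
    have hR: "p (b+1) $ \<psi> = (\<Sum>c<N. ?A $$ (c,b) * Re (S (c+1) $ \<psi>))" if b: "b<N" for b
    proof -
      have "p (b+1) $ \<psi> = Re (Complex (p (b+1) $ \<psi>) (q (b+1) $ \<psi>))" by simp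
      also have "\<dots> = (\<Sum>c<N. if par (Suc c) = b+1 then Re (S (Suc c) $ \<psi>) else 0) - Re (S (b+1) $ \<psi>)"
        unfolding PC[OF b \<psi>] by (simp add: Re_sum if_distrib cong: if_cong)
      also have "\<dots> = (\<Sum>c<N. (if par (Suc c) = b+1 then Re (S (Suc c) $ \<psi>) else 0) - (if c = b then Re (S (Suc c) $ \<psi>) else 0))"
        using b by (simp add: sum_subtractf sum.delta')
      also have "\<dots> = (\<Sum>c<N. ?A $$ (c,b) * Re (S (c+1) $ \<psi>))"
        by (intro sum.cong refl) (auto simp: Aent b)
      finally show ?thesis .
    qed
    have hI: "q (b+1) $ \<psi> = (\<Sum>c<N. ?A $$ (c,b) * Im (S (c+1) $ \<psi>))" if b: "b<N" for b
    proof -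
      have "q (b+1) $ \<psi> = Im (Complex (p (b+1) $ \<psi>) (q (b+1) $ \<psi>))" by simp
      also have "\<dots> = (\<Sum>c<N. if par (Suc c) = b+1 then Im (S (Suc c) $ \<psi>) else 0) - Im (S (b+1) $ \<psi>)"
        unfolding PC[OF b \<psi>] by (simp add: Im_sum if_distrib cong: if_cong)
      also have "\<dots> = (\<Sum>c<N. (if par (Suc c) = b+1 then Im (S (Suc c) $ \<psi>) else 0) - (if c = b then Im (S (Suc c) $ \<psi>) else 0))"
        using b by (simp add: sum_subtractf sum.delta')
      also have "\<dots> = (\<Sum>c<N. ?A $$ (c,b) * Im (S (c+1) $ \<psi>))"
        by (intro sum.cong refl) (auto simp: Aent b)
      finally show ?thesis .
    qed
    show "Re (S (m+1) $ \<psi>) = (\<Sum>b<N. ?B $$ (b,m) * p (b+1) $ \<psi>)"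
      by (rule solve_right[OF Bc A_carrier AB hR m])
    show "Im (S (m+1) $ \<psi>) = (\<Sum>b<N. ?B $$ (b,m) * q (b+1) $ \<psi>)"
      by (rule solve_right[OF Bc A_carrier AB hI m])
  qed
  define Yr where "Yr n = map_mat Re (Ztilde (Z n))" for n
  define Yi where "Yi n = map_mat Im (Ztilde (Z n))" for n
  have Yrc: "\<And>n. Yr n \<in> carrier_mat 3 3" unfolding Yr_def using Ztilde_carrier by auto
  have Yic: "\<And>n. Yi n \<in> carrier_mat 3 3" unfolding Yi_def using Ztilde_carrier by auto
  define Ar where "Ar b m = Yr (m+1) $$ (b,0) * Re (S (m+1) $ 0) + Yr (m+1) $$ (b,1) * Re (S (m+1) $ 1)
      + Yr (m+1) $$ (b,2) * Re (S (m+1) $ 2)" for b m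
  define Ai where "Ai b m = Yi (m+1) $$ (b,0) * Im (S (m+1) $ 0) + Yi (m+1) $$ (b,1) * Im (S (m+1) $ 1)
      + Yi (m+1) $$ (b,2) * Im (S (m+1) $ 2)" for b m
  have Wexp: "W (m+1) \<phi> = Ar \<phi> m + Ai \<phi> m" if m: "m<N" and \<phi>: "\<phi><3" for m \<phi>
  proof -
    have d: "dim_vec (S (m+1)) = 3" using dS[of "m+1"] m by auto
    have e3: "{0..<3::nat} = {0,1,2}" by auto
    have "W (m+1) \<phi> = Re (\<Sum>\<psi>\<in>{0..<3}. cnj (Ztilde (Z (m+1)) $$ (\<phi>,\<psi>)) * S (m+1) $ \<psi>)"
      unfolding W_def using Ztilde_carrier[of "Z (m+1)"] d \<phi> by (simp add: scalar_prod_def)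
    also have "\<dots> = Ar \<phi> m + Ai \<phi> m"
      unfolding e3 Ar_def Yr_def Ai_def Yi_def using Ztilde_carrier[of "Z (m+1)"] \<phi> by simp
    finally show ?thesis .
  qed
  have Rm: "Rmat N par Z = 2 \<cdot>\<^sub>m (Mmat N par * bdiag N Yr * transpose_mat (Mmat N par))"
    unfolding Rmat_def Yr_def by simp
  have Xm: "Xmat N par Z = 2 \<cdot>\<^sub>m (Mmat N par * bdiag N Yi * transpose_mat (Mmat N par))"
    unfolding Xmat_def Yi_def by simp
  have GR: "(Rmat N par Z *\<^sub>v stack N p) $ i = -2 * (\<Sum>m<N. ?F $$ (i div 3, m) * Ar (i mod 3) m)" if i: "i<3*N" for i
    unfolding Rm Ar_def
  proof (rule G[OF Fc Yrc i, where xs = "\<lambda>m \<psi>. Re (S (m+1) $ \<psi>)"])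
    fix m \<psi> :: nat assume m: "m<N" and \<psi>: "\<psi><3"
    have "(\<Sum>c<N. ?F $$ (c,m) * p (c+1) $ \<psi>) = (\<Sum>c<N. - (?B $$ (c,m) * p (c+1) $ \<psi>))"
      by (intro sum.cong refl) (simp add: Fi m)
    then show "Re (S (m+1) $ \<psi>) = - (\<Sum>c<N. ?F $$ (c,m) * p (c+1) $ \<psi>)"
      using PR[OF m \<psi>] by (simp add: sum_negf)
  qed
  have GI: "(Xmat N par Z *\<^sub>v stack N q) $ i = -2 * (\<Sum>m<N. ?F $$ (i div 3, m) * Ai (i mod 3) m)" if i: "i<3*N" for i
    unfolding Xm Ai_def
  proof (rule G[OF Fc Yic i, where xs = "\<lambda>m \<psi>. Im (S (m+1) $ \<psi>)"])
    fix m \<psi> :: nat assume m: "m<N" and \<psi>: "\<psi><3"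
    have "(\<Sum>c<N. ?F $$ (c,m) * q (c+1) $ \<psi>) = (\<Sum>c<N. - (?B $$ (c,m) * q (c+1) $ \<psi>))"
      by (intro sum.cong refl) (simp add: Fi m)
    then show "Im (S (m+1) $ \<psi>) = - (\<Sum>c<N. ?F $$ (c,m) * q (c+1) $ \<psi>)"
      using PI[OF m \<psi>] by (simp add: sum_negf)
  qed
  have dR: "dim_row (Rmat N par Z) = 3*N" using M_carrier[OF Fc] unfolding Rm by simp
  have dX: "dim_row (Xmat N par Z) = 3*N" using M_carrier[OF Fc] unfolding Xm by simp
  show ?thesis
  proof (rule eq_vecI)
    show "dim_vec (stack N v) = dim_vec (Rmat N par Z *\<^sub>v stack N p + Xmat N par Z *\<^sub>v stack N q + vec (3*N) (\<lambda>_. v0))"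
      using dR by (simp add: stack_def)
    fix i assume "i < dim_vec (Rmat N par Z *\<^sub>v stack N p + Xmat N par Z *\<^sub>v stack N q + vec (3*N) (\<lambda>_. v0))"
    then have i: "i < 3*N" by simp
    let ?b = "i div 3" and ?ph = "i mod 3"
    have b: "?b < N" and ph: "?ph < 3" using i by auto
    have "stack N v $ i = v (?b+1) $ ?ph" using i by (simp add: stack_def)
    also have "\<dots> = v0 + (\<Sum>m<N. ?B $$ (?b,m) * (2 * (Ar ?ph m + Ai ?ph m)))"
    proof -
      have "(\<Sum>m<N. ?B $$ (?b,m) * (2 * W (m+1) ?ph)) = (\<Sum>m<N. ?B $$ (?b,m) * (2 * (Ar ?ph m + Ai ?ph m)))"
        using Wexp[OF _ ph] by (intro sum.cong refl) simp
      then show ?thesis using V[OF b ph] by simp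
    qed
    also have "\<dots> = -2 * (\<Sum>m<N. ?F $$ (?b, m) * Ar ?ph m) + -2 * (\<Sum>m<N. ?F $$ (?b, m) * Ai ?ph m) + v0"
    proof -
      have "(\<Sum>m<N. ?F $$ (?b, m) * Ar ?ph m) = - (\<Sum>m<N. ?B $$ (?b, m) * Ar ?ph m)"
        by (subst sum_negf[symmetric], intro sum.cong refl) (simp add: Fi b)
      moreover have "(\<Sum>m<N. ?F $$ (?b, m) * Ai ?ph m) = - (\<Sum>m<N. ?B $$ (?b, m) * Ai ?ph m)"
        by (subst sum_negf[symmetric], intro sum.cong refl) (simp add: Fi b)
      moreover have "(\<Sum>m<N. ?B $$ (?b,m) * (2 * (Ar ?ph m + Ai ?ph m)))
          = (\<Sum>m<N. 2 * (?B $$ (?b,m) * Ar ?ph m) + 2 * (?B $$ (?b,m) * Ai ?ph m))"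
        by (intro sum.cong refl) (simp add: algebra_simps)
      moreover have "\<dots> = 2 * (\<Sum>m<N. ?B $$ (?b,m) * Ar ?ph m) + 2 * (\<Sum>m<N. ?B $$ (?b,m) * Ai ?ph m)"
        by (simp add: sum.distrib sum_distrib_left)
      ultimately show ?thesis by linarith
    qed
    also have "\<dots> = (Rmat N par Z *\<^sub>v stack N p + Xmat N par Z *\<^sub>v stack N q + vec (3*N) (\<lambda>_. v0)) $ i"
      using i dR dX GR[OF i] GI[OF i] by simp
    finally show "stack N v $ i = (Rmat N par Z *\<^sub>v stack N p + Xmat N par Z *\<^sub>v stack N q + vec (3*N) (\<lambda>_. v0)) $ i" .
  qed
qed

end
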